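(* Let $n\geq 3$ and let $(\mathbb{R}^n,g)$ be the pseudo-Euclidean space with Cartesian coordinates $x=(x_1,\dots,x_n)$ and metric components $g_{ij}=\delta_{ij}\varepsilon_i$, $1\le i,j\le n$, where $\varepsilon_i=\pm1$. Let $\Omega\subseteq\mathbb{R}^n$ be open and let $\varphi>0$, $N>0$ and $\psi$ be smooth functions on $\Omega$. Then $(\Omega,\bar g,N,\psi)$ with $\bar g=g/\varphi^2$ is an electrostatic system if and only if $\varphi,\psi,N$ satisfy: for all $i\neq j$, $$(n-2)N\varphi_{,ij}-\varphi N_{,ij}-\varphi_{,i}N_{,j}-\varphi_{,j}N_{,i}+2\frac{\varphi}{N}\psi_{,i}\psi_{,j}=0;$$ for each $i$, $$\varphi\Big[(n-2)N\varphi_{,ii}-\varphi N_{,ii}-2\varphi_{,i}N_{,i}+2\frac{\varphi}{N}(\psi_{,i})^2\Big]+\varepsilon_i\sum_{k=1}^n\varepsilon_k\Big[\varphi\varphi_{,kk}N+\varphi\varphi_{,k}N_{,k}-(n-1)N(\varphi_{,k})^2-\frac{2}{(n-1)N}\varphi^2(\psi_{,k})^2\Big]=0;$$ $$\sum_{k=1}^n\varepsilon_k\big\{N\varphi\psi_{,kk}-(n-2)N\varphi_{,k}\psi_{,k}-\varphi\psi_{,k}N_{,k}\big\}=0;$$ $$\sum_{k=1}^n\varepsilon_k\big\{\varphi NN_{,kk}-(n-2)N\varphi_{,k}N_{,k}-\widehat C^2\varphi(\psi_{,k})^2\big\}=0,$$ where $\widehat C^2=\frac{2(n-2)}{n-1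}$.
   Context: Notation: $F_{,i}=\partial F/\partial x_i$, $F_{,ij}=\partial^2F/\partial x_i\partial x_j$. Definition (electrostatic system): Let $(M^n,h)$, $n\ge3$, be a semi-Riemannian manifold and $N:M\to\mathbb{R}_{>0}$, $\psi:M\to\mathbb{R}$ smooth. $(M,h,N,\psi)$ is an electrostatic system (static Einstein–Maxwell equations) if $\Delta N=\widehat C^2\frac{|\nabla\psi|^2}{N}$, $\operatorname{div}\big(\frac{\nabla\psi}{N}\big)=0$, and $N\operatorname{Ric}=\nabla^2N-2\frac{\nabla\psi\otimes\nabla\psi}{N}+\frac{2}{(n-1)N}|\nabla\psi|^2h$, where $\widehat C^2=\frac{2(n-2)}{n-1}$ and $\nabla,\Delta,\nabla^2,\operatorname{Ric},\operatorname{div}$ are taken with respect to $h$. *)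

theory Defs
  imports "HOL-Analysis.Analysis"
begin

text \<open>Coordinate calculus on open subsets of R^n, with points in real^'n
(the index type 'n plays the role of {1..n}, n = CARD('n)).\<close>

definition pd :: "'n::finite \<Rightarrow> (real^'n \<Rightarrow> real) \<Rightarrow> real^'n \<Rightarrow> real" where
  "pd i f x = deriv (\<lambda>t. f (x + t *\<^sub>R axis i 1)) 0"

fun pds :: "'n::finite list \<Rightarrow> (real^'n \<Rightarrow> real) \<Rightarrow> real^'n \<Rightarrow> real" where
  "pds [] f = f"
| "pds (i # is) f = pd i (pds is f)"

definition smooth_on :: "(real^'n::finite) set \<Rightarrow> (real^'n \<Rightarrow> real) \<Rightarrow> bool" where
  "smooth_on \<Omega> f \<longleftrightarrow> (\<forall>is. \<forall>x\<in>\<Omega>. pds is f differentiable (at x))"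

definition ginv :: "(real^'n \<Rightarrow> real^'n^'n) \<Rightarrow> real^'n \<Rightarrow> 'n::finite \<Rightarrow> 'n \<Rightarrow> real" where
  "ginv G x i j = matrix_inv (G x) $ i $ j"

definition christoffel :: "(real^'n \<Rightarrow> real^'n^'n) \<Rightarrow> 'n::finite \<Rightarrow> 'n \<Rightarrow> 'n \<Rightarrow> real^'n \<Rightarrow> real" where
  "christoffel G k i j x = (1/2) * (\<Sum>l\<in>UNIV. ginv G x k l *
      (pd i (\<lambda>y. G y $ j $ l) x + pd j (\<lambda>y. G y $ i $ l) x - pd l (\<lambda>y. G y $ i $ j) x))"

definition hess :: "(real^'n \<Rightarrow> real^'n^'n) \<Rightarrow> (real^'n \<Rightarrow> real) \<Rightarrow> 'n::finite \<Rightarrow> 'n \<Rightarrow> real^'n \<Rightarrow> real" where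
  "hess G f i j x = pd i (pd j f) x - (\<Sum>k\<in>UNIV. christoffel G k i j x * pd k f x)"

definition laplacian :: "(real^'n \<Rightarrow> real^'n^'n) \<Rightarrow> (real^'n \<Rightarrow> real) \<Rightarrow> real^'n::finite \<Rightarrow> real" where
  "laplacian G f x = (\<Sum>i\<in>UNIV. \<Sum>j\<in>UNIV. ginv G x i j * hess G f i j x)"

definition gradsq :: "(real^'n \<Rightarrow> real^'n^'n) \<Rightarrow> (real^'n \<Rightarrow> real) \<Rightarrow> real^'n::finite \<Rightarrow> real" where
  "gradsq G f x = (\<Sum>i\<in>UNIV. \<Sum>j\<in>UNIV. ginv G x i j * pd i f x * pd j f x)"

text \<open>Divergence of a vector field given by its contravariant components X i.\<close>
definition divergence :: "(real^'n \<Rightarrow> real^'n^'n) \<Rightarrow> ('n::finite \<Rightarrow> real^'n \<Rightarrow> real) \<Rightarrow> real^'n \<Rightarrow> real" where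
  "divergence G X x = (\<Sum>i\<in>UNIV. pd i (X i) x + (\<Sum>k\<in>UNIV. christoffel G i i k x * X k x))"

definition grad :: "(real^'n \<Rightarrow> real^'n^'n) \<Rightarrow> (real^'n \<Rightarrow> real) \<Rightarrow> 'n::finite \<Rightarrow> real^'n \<Rightarrow> real" where
  "grad G f i x = (\<Sum>j\<in>UNIV. ginv G x i j * pd j f x)"

definition ricci :: "(real^'n \<Rightarrow> real^'n^'n) \<Rightarrow> 'n::finite \<Rightarrow> 'n \<Rightarrow> real^'n \<Rightarrow> real" where
  "ricci G i j x = (\<Sum>k\<in>UNIV. pd k (christoffel G k i j) x - pd j (christoffel G k i k) x
      + (\<Sum>l\<in>UNIV. christoffel G k k l x * christoffel G l i j x
                  - christoffel G k j l x * christoffel G l i k x))"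

definition Chat2 :: "nat \<Rightarrow> real" where
  "Chat2 n = 2 * (real n - 2) / (real n - 1)"

definition semi_riemannian_on :: "(real^'n::finite) set \<Rightarrow> (real^'n \<Rightarrow> real^'n^'n) \<Rightarrow> bool" where
  "semi_riemannian_on \<Omega> G \<longleftrightarrow> open \<Omega> \<and>
     (\<forall>i j. smooth_on \<Omega> (\<lambda>x. G x $ i $ j)) \<and>
     (\<forall>x\<in>\<Omega>. transpose (G x) = G x \<and> invertible (G x))"

text \<open>Electrostatic system (static Einstein--Maxwell equations) on an open
subset of R^n with metric G, n = CARD('n).\<close>
definition electrostatic :: "(real^'n::finite) set \<Rightarrow> (real^'n \<Rightarrow> real^'n^'n) \<Rightarrow>
    (real^'n \<Rightarrow> real) \<Rightarrow> (real^'n \<Rightarrow> real) \<Rightarrow> bool" where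
  "electrostatic \<Omega> G N \<psi> \<longleftrightarrow>
     CARD('n) \<ge> 3 \<and> semi_riemannian_on \<Omega> G \<and>
     smooth_on \<Omega> N \<and> smooth_on \<Omega> \<psi> \<and> (\<forall>x\<in>\<Omega>. N x > 0) \<and>
     (\<forall>x\<in>\<Omega>.
        laplacian G N x = Chat2 CARD('n) * gradsq G \<psi> x / N x \<and>
        divergence G (\<lambda>i y. grad G \<psi> i y / N y) x = 0 \<and>
        (\<forall>i j. N x * ricci G i j x =
            hess G N i j x - 2 * pd i \<psi> x * pd j \<psi> x / N x
            + 2 / ((real CARD('n) - 1) * N x) * gradsq G \<psi> x * G x $ i $ j))"

definition pseudo_euclidean :: "('n::finite \<Rightarrow> real) \<Rightarrow> real^'n^'n" where
  "pseudo_euclidean \<epsilon> = (\<chi> i j. if i = j then \<epsilon> i else 0)"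

end

theory Submission
  imports Defs
begin


lemma line_deriv:
  fixes f :: "real^'n::finite \<Rightarrow> real"
  assumes "(f has_derivative D) (at (y + t *\<^sub>R v))"
  shows "((\<lambda>s. f (y + s *\<^sub>R v)) has_real_derivative D v) (at t)"
proof -
  have l: "((\<lambda>s. y + s *\<^sub>R v) has_derivative (\<lambda>s. s *\<^sub>R v)) (at t)"
    by (auto intro!: derivative_eq_intros)
  have "((\<lambda>s. f (y + s *\<^sub>R v)) has_derivative (\<lambda>s. D (s *\<^sub>R v))) (at t)"
    using has_derivative_compose[OF l assms] by (simp add: o_def)
  moreover have "bounded_linear D" using assms has_derivative_bounded_linear by blast
  hence "(\<lambda>s. D (s *\<^sub>R v)) = (\<lambda>s. s * D v)"
    by (simp add: linear_simps(5) bounded_linear.linear)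
  moreover have "(\<lambda>s. s * D v) = (*) (D v)" by (auto simp: mult.commute)
  ultimately show ?thesis by (simp add: has_field_derivative_def)
qed

lemma pd_eq:
  assumes "(f has_derivative D) (at y)"
  shows "pd i f y = D (axis i 1)"
  unfolding pd_def
  by (rule DERIV_imp_deriv, rule line_deriv) (use assms in simp)

lemma pd_DERIV:
  fixes f :: "real^'n::finite \<Rightarrow> real"
  assumes "f differentiable (at y)"
  shows "((\<lambda>t. f (y + t *\<^sub>R axis i 1)) has_real_derivative pd i f y) (at 0)"
proof -
  obtain D where D: "(f has_derivative D) (at y)" using assms differentiable_def by blast
  show ?thesis unfolding pd_eq[OF D] by (rule line_deriv) (use D in simp)
qed

lemma pd_add:
  assumes "f differentiable (at y)" "g differentiable (at y)"
  shows "pd i (\<lambda>x. f x + g x) y = pd i f y + pd i g y"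
  unfolding pd_def[of i "\<lambda>x. f x + g x"]
  by (rule DERIV_imp_deriv, rule DERIV_add) (use pd_DERIV assms in auto)

lemma pd_diff:
  assumes "f differentiable (at y)" "g differentiable (at y)"
  shows "pd i (\<lambda>x. f x - g x) y = pd i f y - pd i g y"
  unfolding pd_def[of i "\<lambda>x. f x - g x"]
  by (rule DERIV_imp_deriv, rule DERIV_diff) (use pd_DERIV assms in auto)

lemma pd_mult:
  assumes "f differentiable (at y)" "g differentiable (at y)"
  shows "pd i (\<lambda>x. f x * g x) y = pd i f y * g y + f y * pd i g y"
proof -
  have d: "((\<lambda>t. f (y + t *\<^sub>R axis i 1) * g (y + t *\<^sub>R axis i 1)) has_real_derivative
     pd i f y * g y + f y * pd i g y) (at 0)"
    using DERIV_mult[OF pd_DERIV[OF assms(1)] pd_DERIV[OF assms(2)], of i i] by (simp add: ac_simps)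
  show ?thesis unfolding pd_def[of i "\<lambda>x. f x * g x"] by (rule DERIV_imp_deriv[OF d])
qed

lemma pd_const: "pd i (\<lambda>x. c) y = 0"
  unfolding pd_def by simp

lemma pd_inverse:
  assumes "f differentiable (at y)" "f y \<noteq> 0"
  shows "pd i (\<lambda>x. inverse (f x)) y = - pd i f y / (f y)^2"
proof -
  have d: "((\<lambda>t. inverse (f (y + t *\<^sub>R axis i 1))) has_real_derivative
     - pd i f y / (f y)^2) (at 0)"
    using DERIV_inverse_fun[OF pd_DERIV[OF assms(1)], of i] assms(2)
    by (simp add: power2_eq_square divide_inverse mult.commute)
  show ?thesis unfolding pd_def[of i "\<lambda>x. inverse (f x)"] by (rule DERIV_imp_deriv[OF d])
qed

lemma pd_local:
  assumes "open S" "y \<in> S" "\<And>z. z \<in> S \<Longrightarrow> f z = g z"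
  shows "pd i f y = pd i g y"
  unfolding pd_def
proof (rule deriv_cong_ev)
  have "continuous_on UNIV (\<lambda>t::real. y + t *\<^sub>R axis i 1)" by (intro continuous_intros)
  from open_vimage[OF assms(1) this] have "open {t::real. y + t *\<^sub>R axis i 1 \<in> S}"
    by (simp add: vimage_def)
  moreover have "0 \<in> {t::real. y + t *\<^sub>R axis i 1 \<in> S}" using assms(2) by simp
  ultimately show "\<forall>\<^sub>F x in nhds 0. f (y + x *\<^sub>R axis i 1) = g (y + x *\<^sub>R axis i 1)"
    unfolding eventually_nhds using assms(3) by blast
qed simp

lemma pds_local:
  assumes "open S" "\<And>z. z \<in> S \<Longrightarrow> f z = g z"
  shows "y \<in> S \<Longrightarrow> pds js f y = pds js g y"
proof (induction js arbitrary: y)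
  case Nil thus ?case using assms by simp
next
  case (Cons i js)
  show ?case using pd_local[OF assms(1) Cons.prems, of "pds js f" "pds js g" i] Cons.IH by simp
qed

lemma pds_append: "pds (js @ [j]) f = pds js (pd j f)"
  by (induction js) auto




definition su :: "(real^'n::finite) set \<Rightarrow> nat \<Rightarrow> (real^'n \<Rightarrow> real) \<Rightarrow> bool" where
  "su S m f \<longleftrightarrow> (\<forall>js::'n list. length js \<le> m \<longrightarrow> (\<forall>x\<in>S. pds js f differentiable (at x)))"

lemma su_Suc: fixes f :: "real^'n::finite \<Rightarrow> real" shows "su S (Suc m) f \<longleftrightarrow> (\<forall>x\<in>S. f differentiable (at x)) \<and> (\<forall>j. su S m (pd j f))"
proof
  assume a: "su S (Suc m) f"
  show "(\<forall>x\<in>S. f differentiable (at x)) \<and> (\<forall>j. su S m (pd j f))"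
  proof
    show "\<forall>x\<in>S. f differentiable (at x)" using a[unfolded su_def, rule_format, of "[]"] by simp
    show "\<forall>j. su S m (pd j f)" unfolding su_def
    proof (intro allI impI ballI)
      fix j and js :: "'n list" and x assume "length js \<le> m" "x \<in> S"
      thus "pds js (pd j f) differentiable (at x)"
        using a[unfolded su_def, rule_format, of "js @ [j]"] by (simp add: pds_append)
    qed
  qed
next
  assume a: "(\<forall>x\<in>S. f differentiable (at x)) \<and> (\<forall>j. su S m (pd j f))"
  show "su S (Suc m) f" unfolding su_def
  proof (intro allI impI ballI)
    fix js :: "'n list" and x assume l: "length js \<le> Suc m" and x: "x \<in> S"
    show "pds js f differentiable (at x)"
    proof (cases js rule: rev_cases)
      case Nil thus ?thesis using a x by simp
    next
      case (snoc ks j)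
      thus ?thesis using a l x unfolding su_def by (simp add: pds_append)
    qed
  qed
qed

lemma su_0: "su S 0 f \<longleftrightarrow> (\<forall>x\<in>S. f differentiable (at x))"
  unfolding su_def by simp

lemma smooth_on_su: "smooth_on S f \<longleftrightarrow> (\<forall>m. su S m f)"
  unfolding smooth_on_def su_def by (metis le_refl)

lemma smooth_pd: "smooth_on S f \<Longrightarrow> smooth_on S (pd j f)"
  unfolding smooth_on_su using su_Suc by blast

lemma smooth_diff': "smooth_on S f \<Longrightarrow> x \<in> S \<Longrightarrow> f differentiable (at x)"
  unfolding smooth_on_def by (metis pds.simps(1))

lemma diff_transform:
  assumes "f differentiable (at x)" "open S" "x \<in> S" "\<And>z. z \<in> S \<Longrightarrow> f z = g z"
  shows "g differentiable (at x)"
  using assms has_derivative_transform_within_open unfolding differentiable_def by blast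

lemma su_local:
  fixes f :: "real^'n::finite \<Rightarrow> real"
  assumes "open S" "\<And>z. z \<in> S \<Longrightarrow> f z = g z" "su S m f"
  shows "su S m g"
  unfolding su_def
proof (intro allI impI ballI)
  fix js :: "'n list" and x assume "length js \<le> m" "x \<in> S"
  show "pds js g differentiable (at x)"
  proof -
    have "pds js f differentiable (at x)" using assms(3) \<open>length js \<le> m\<close> \<open>x \<in> S\<close> unfolding su_def by blast
    moreover have "\<forall>z\<in>S. pds js f z = pds js g z" using pds_local[of S f g _ js] assms(1,2) by blast
    ultimately show "pds js g differentiable (at x)" using diff_transform[OF _ assms(1) \<open>x \<in> S\<close>] by blast
  qed
qed

lemma su_mono: "su S m' f \<Longrightarrow> m \<le> m' \<Longrightarrow> su S m f"
  unfolding su_def by auto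

lemma su_const: "su S m (\<lambda>x. c)"
proof (induction m arbitrary: c)
  case 0 thus ?case by (simp add: su_0)
next
  case (Suc m) thus ?case by (simp add: su_Suc pd_const[abs_def])
qed

lemma su_add:
  assumes "open S" shows "su S m f \<Longrightarrow> su S m g \<Longrightarrow> su S m (\<lambda>x. f x + g x)"
proof (induction m arbitrary: f g)
  case 0 thus ?case by (simp add: su_0)
next
  case (Suc m)
  have "su S m (pd j (\<lambda>x. f x + g x))" for j
  proof (rule su_local[OF assms])
    show "su S m (\<lambda>x. pd j f x + pd j g x)" using Suc by (simp add: su_Suc)
    show "z \<in> S \<Longrightarrow> pd j f z + pd j g z = pd j (\<lambda>x. f x + g x) z" for z
      using Suc.prems by (simp add: su_Suc pd_add)
  qed
  thus ?case using Suc.prems by (simp add: su_Suc)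
qed

lemma su_mult:
  assumes "open S" shows "su S m f \<Longrightarrow> su S m g \<Longrightarrow> su S m (\<lambda>x. f x * g x)"
proof (induction m arbitrary: f g)
  case 0 thus ?case by (simp add: su_0)
next
  case (Suc m)
  have sm: "su S m f" "su S m g" using Suc.prems
    by (auto intro: su_mono)
  have "su S m (pd j (\<lambda>x. f x * g x))" for j
  proof (rule su_local[OF assms])
    show "su S m (\<lambda>x. pd j f x * g x + f x * pd j g x)"
      using Suc sm by (intro su_add[OF assms]) (simp_all add: su_Suc)
    show "z \<in> S \<Longrightarrow> pd j f z * g z + f z * pd j g z = pd j (\<lambda>x. f x * g x) z" for z
      using Suc.prems by (simp add: su_Suc pd_mult)
  qed
  thus ?case using Suc.prems by (simp add: su_Suc)
qed

lemma su_inverse: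
  assumes "open S" "\<forall>x\<in>S. f x \<noteq> 0" "smooth_on S f" shows "su S m (\<lambda>x. inverse (f x))"
proof (induction m)
  case 0 thus ?case using assms by (simp add: su_0 smooth_diff')
next
  case (Suc m)
  have "su S m (pd j (\<lambda>x. inverse (f x)))" for j
  proof (rule su_local[OF assms(1)])
    show "su S m (\<lambda>x. ((-1) * pd j f x) * (inverse (f x) * inverse (f x)))"
    proof (intro su_mult[OF assms(1)] su_const)
      show "su S m (pd j f)" using smooth_pd[OF assms(3)] unfolding smooth_on_su by blast
    qed (rule Suc)+
    show "z \<in> S \<Longrightarrow> ((-1) * pd j f z) * (inverse (f z) * inverse (f z)) = pd j (\<lambda>x. inverse (f x)) z" for z
      using assms by (simp add: pd_inverse smooth_diff' power2_eq_square divide_inverse)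
  qed
  thus ?case using assms by (simp add: su_Suc smooth_diff')
qed




lemma line_pd:
  fixes f :: "real^'n::finite \<Rightarrow> real"
  assumes "f differentiable (at (y + t *\<^sub>R axis i 1))"
  shows "((\<lambda>s. f (y + s *\<^sub>R axis i 1)) has_real_derivative pd i f (y + t *\<^sub>R axis i 1)) (at t)"
proof -
  obtain D where D: "(f has_derivative D) (at (y + t *\<^sub>R axis i 1))" using assms differentiable_def by blast
  show ?thesis unfolding pd_eq[OF D] by (rule line_deriv[OF D])
qed

lemma mvt_sym:
  fixes g g' :: "real \<Rightarrow> real"
  assumes "h \<noteq> 0" "\<And>t. \<bar>t\<bar> \<le> \<bar>h\<bar> \<Longrightarrow> (g has_real_derivative g' t) (at t)"
  shows "\<exists>z. \<bar>z\<bar> \<le> \<bar>h\<bar> \<and> g h - g 0 = h * g' z"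
proof (cases "h > 0")
  case True
  from MVT2[OF True, of g g'] assms(2) obtain z where "0 < z" "z < h" "g h - g 0 = (h - 0) * g' z"
    by fastforce
  thus ?thesis by (intro exI[of _ z]) auto
next
  case False
  hence h: "h < 0" using assms(1) by simp
  from MVT2[OF h, of g g'] assms(2) obtain z where "h < z" "z < 0" "g 0 - g h = (0 - h) * g' z"
    by fastforce
  thus ?thesis by (intro exI[of _ z]) (auto simp: algebra_simps)
qed

lemma schwarz_approx:
  fixes f :: "real^'n::finite \<Rightarrow> real"
  assumes S: "open S" "x \<in> S" and fd: "\<forall>y\<in>S. f differentiable (at y)"
    and Fd: "pd i f differentiable (at x)" and e: "e > 0"
  shows "\<exists>d>0. \<forall>h. 0 < \<bar>h\<bar> \<and> \<bar>h\<bar> < d \<longrightarrow>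
     \<bar>(f (x + h *\<^sub>R axis i 1 + h *\<^sub>R axis j 1) - f (x + h *\<^sub>R axis i 1) - f (x + h *\<^sub>R axis j 1) + f x)
       - h^2 * pd j (pd i f) x\<bar> \<le> 3 * e * h^2"
proof -
  define a where "a = axis i (1::real)"
  define b where "b = axis j (1::real)"
  define F where "F = pd i f"
  obtain L where L: "(F has_derivative L) (at x)" using Fd F_def differentiable_def by blast
  have Lb: "pd j F x = L b" unfolding b_def by (rule pd_eq[OF L])
  have lin: "linear L" using L has_derivative_linear by blast
  obtain d1 where d1: "d1 > 0" "\<forall>y. norm (y - x) < d1 \<longrightarrow> norm (F y - F x - L (y - x)) \<le> e * norm (y - x)"
    using L e unfolding has_derivative_at_alt by blast
  obtain d2 where d2: "d2 > 0" "ball x d2 \<subseteq> S" using S open_contains_ball by blast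
  define d where "d = min d1 d2 / 2"
  have dpos: "d > 0" using d1 d2 d_def by simp
  have "\<bar>(f (x + h *\<^sub>R a + h *\<^sub>R b) - f (x + h *\<^sub>R a) - f (x + h *\<^sub>R b) + f x)
       - h^2 * pd j F x\<bar> \<le> 3 * e * h^2" if h: "0 < \<bar>h\<bar>" "\<bar>h\<bar> < d" for h
  proof -
    have inS: "x + t *\<^sub>R a + s *\<^sub>R b \<in> S" if "\<bar>t\<bar> \<le> \<bar>h\<bar>" "\<bar>s\<bar> \<le> \<bar>h\<bar>" for t s
    proof -
      have "norm (t *\<^sub>R a + s *\<^sub>R b) \<le> \<bar>t\<bar> + \<bar>s\<bar>"
        using norm_triangle_ineq[of "t *\<^sub>R a" "s *\<^sub>R b"] by (simp add: a_def b_def)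
      also have "\<dots> < d2" using that h d_def by linarith
      moreover have "dist x (x + (t *\<^sub>R a + s *\<^sub>R b)) = norm (t *\<^sub>R a + s *\<^sub>R b)"
        by (metis dist_norm add_diff_cancel_left' norm_minus_commute)
      ultimately have "x + (t *\<^sub>R a + s *\<^sub>R b) \<in> ball x d2" by simp
      thus ?thesis using d2(2) by (auto simp: add.assoc)
    qed
    define g where "g t = f (x + h *\<^sub>R b + t *\<^sub>R a) - f (x + t *\<^sub>R a)" for t
    define g' where "g' t = F (x + h *\<^sub>R b + t *\<^sub>R a) - F (x + t *\<^sub>R a)" for t
    have "(g has_real_derivative g' t) (at t)" if "\<bar>t\<bar> \<le> \<bar>h\<bar>" for t
    proof -
      have 1: "f differentiable (at (x + h *\<^sub>R b + t *\<^sub>R a))"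
        using fd inS[OF that, of h] by (simp add: add_ac)
      have 2: "f differentiable (at (x + t *\<^sub>R a))"
        using fd inS[OF that, of 0] by simp
      show ?thesis unfolding g_def g'_def F_def a_def
        by (rule DERIV_diff; rule line_pd) (use 1 2 a_def in auto)
    qed
    then obtain z where z: "\<bar>z\<bar> \<le> \<bar>h\<bar>" "g h - g 0 = h * g' z"
      using mvt_sym[of h g g'] h by auto
    have Delta: "f (x + h *\<^sub>R a + h *\<^sub>R b) - f (x + h *\<^sub>R a) - f (x + h *\<^sub>R b) + f x = h * g' z"
      using z(2) unfolding g_def by (simp add: add_ac)
    have n1: "norm (z *\<^sub>R a + h *\<^sub>R b) \<le> 2 * \<bar>h\<bar>"
      using norm_triangle_ineq[of "z *\<^sub>R a" "h *\<^sub>R b"] z(1) by (simp add: a_def b_def)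
    have n2: "norm (z *\<^sub>R a) \<le> \<bar>h\<bar>" using z(1) by (simp add: a_def)
    have e1: "\<bar>F (x + h *\<^sub>R b + z *\<^sub>R a) - F x - L (z *\<^sub>R a + h *\<^sub>R b)\<bar> \<le> e * (2 * \<bar>h\<bar>)"
    proof -
      have "norm ((x + h *\<^sub>R b + z *\<^sub>R a) - x) < d1" using n1 h d_def by (simp add: add_ac)
      hence "\<bar>F (x + h *\<^sub>R b + z *\<^sub>R a) - F x - L ((x + h *\<^sub>R b + z *\<^sub>R a) - x)\<bar>
          \<le> e * norm ((x + h *\<^sub>R b + z *\<^sub>R a) - x)" using d1(2) by (metis real_norm_def)
      also have "\<dots> \<le> e * (2 * \<bar>h\<bar>)" using n1 e by (simp add: add_ac)
      finally show ?thesis by (simp add: add_ac)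
    qed
    have e2: "\<bar>F (x + z *\<^sub>R a) - F x - L (z *\<^sub>R a)\<bar> \<le> e * \<bar>h\<bar>"
    proof -
      have "norm ((x + z *\<^sub>R a) - x) < d1" using n2 h d_def by (simp add: a_def) linarith
      hence "\<bar>F (x + z *\<^sub>R a) - F x - L ((x + z *\<^sub>R a) - x)\<bar>
          \<le> e * norm ((x + z *\<^sub>R a) - x)" using d1(2) by (metis real_norm_def)
      also have "\<dots> \<le> e * \<bar>h\<bar>" using n2 e by (simp add: mult_left_mono)
      finally show ?thesis by simp
    qed
    have Llin: "L (z *\<^sub>R a + h *\<^sub>R b) = L (z *\<^sub>R a) + h * L b"
      using lin by (simp add: linear_add linear_scale)
    have "\<bar>g' z - h * L b\<bar> \<le> 3 * e * \<bar>h\<bar>"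
      using e1 e2 Llin unfolding g'_def by (simp add: abs_le_iff)
    hence "\<bar>h\<bar> * \<bar>g' z - h * L b\<bar> \<le> \<bar>h\<bar> * (3 * e * \<bar>h\<bar>)" by (simp add: mult_left_mono)
    thus ?thesis unfolding Delta Lb
      by (simp add: abs_mult[symmetric] right_diff_distrib power2_eq_square ac_simps)
  qed
  hence key: "\<forall>h. 0 < \<bar>h\<bar> \<and> \<bar>h\<bar> < d \<longrightarrow> \<bar>(f (x + h *\<^sub>R a + h *\<^sub>R b) - f (x + h *\<^sub>R a) - f (x + h *\<^sub>R b) + f x)
       - h^2 * pd j F x\<bar> \<le> 3 * e * h^2" by blast
  show ?thesis
    by (rule exI[of _ d], rule conjI[OF dpos]) (rule key[unfolded a_def b_def F_def])
qed

lemma schwarz: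
  fixes f :: "real^'n::finite \<Rightarrow> real"
  assumes S: "open S" "x \<in> S" and fd: "\<forall>y\<in>S. f differentiable (at y)"
    and Fd: "pd i f differentiable (at x)" "pd j f differentiable (at x)"
  shows "pd i (pd j f) x = pd j (pd i f) x"
proof (rule ccontr)
  define A where "A = pd j (pd i f) x"
  define B where "B = pd i (pd j f) x"
  assume "B \<noteq> A"
  define e where "e = \<bar>A - B\<bar> / 7"
  have e: "e > 0" using \<open>B \<noteq> A\<close> e_def by simp
  obtain d1 where d1: "d1 > 0" "\<forall>h. 0 < \<bar>h\<bar> \<and> \<bar>h\<bar> < d1 \<longrightarrow>
     \<bar>(f (x + h *\<^sub>R axis i 1 + h *\<^sub>R axis j 1) - f (x + h *\<^sub>R axis i 1) - f (x + h *\<^sub>R axis j 1) + f x)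
       - h^2 * A\<bar> \<le> 3 * e * h^2"
    using schwarz_approx[OF S fd Fd(1) e, of j] A_def by blast
  obtain d2 where d2: "d2 > 0" "\<forall>h. 0 < \<bar>h\<bar> \<and> \<bar>h\<bar> < d2 \<longrightarrow>
     \<bar>(f (x + h *\<^sub>R axis j 1 + h *\<^sub>R axis i 1) - f (x + h *\<^sub>R axis j 1) - f (x + h *\<^sub>R axis i 1) + f x)
       - h^2 * B\<bar> \<le> 3 * e * h^2"
    using schwarz_approx[OF S fd Fd(2) e, of i] B_def by blast
  define h where "h = min d1 d2 / 2"
  have h: "0 < \<bar>h\<bar>" "\<bar>h\<bar> < d1" "\<bar>h\<bar> < d2" using d1 d2 h_def by auto
  define D where "D = f (x + h *\<^sub>R axis i 1 + h *\<^sub>R axis j 1) - f (x + h *\<^sub>R axis i 1) - f (x + h *\<^sub>R axis j 1) + f x"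
  have 1: "\<bar>D - h^2 * A\<bar> \<le> 3 * e * h^2" using d1(2) h D_def by blast
  have "\<bar>(f (x + h *\<^sub>R axis j 1 + h *\<^sub>R axis i 1) - f (x + h *\<^sub>R axis j 1) - f (x + h *\<^sub>R axis i 1) + f x)
       - h^2 * B\<bar> \<le> 3 * e * h^2" using d2(2) h by blast
  moreover have "(f (x + h *\<^sub>R axis j 1 + h *\<^sub>R axis i 1) - f (x + h *\<^sub>R axis j 1) - f (x + h *\<^sub>R axis i 1) + f x) = D"
    unfolding D_def by (simp add: algebra_simps)
  ultimately have 2: "\<bar>D - h^2 * B\<bar> \<le> 3 * e * h^2" by simp
  have "h^2 * A - h^2 * B \<le> 6 * e * h^2" "h^2 * B - h^2 * A \<le> 6 * e * h^2"
    using 1 2 by (simp_all add: abs_le_iff)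
  hence "\<bar>h^2 * (A - B)\<bar> \<le> 6 * e * h^2" by (simp add: right_diff_distrib abs_le_iff)
  hence "h^2 * \<bar>A - B\<bar> \<le> h^2 * (6 * e)" by (simp add: abs_mult ac_simps)
  moreover have "h^2 > 0" using h by simp
  ultimately have "\<bar>A - B\<bar> \<le> 6 * e" by simp
  thus False using e e_def by simp
qed




lemma matrix_inv_eq:
  fixes A B :: "real^'n::finite^'n"
  assumes "A ** B = mat 1" "B ** A = mat 1"
  shows "matrix_inv A = B"
proof -
  have ex: "\<exists>A'. A ** A' = mat 1 \<and> A' ** A = mat 1" using assms by blast
  define C where "C = matrix_inv A"
  have C: "A ** C = mat 1" "C ** A = mat 1" using someI_ex[OF ex] unfolding C_def matrix_inv_def by auto
  have "C = C ** (A ** B)" using assms by simp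
  also have "\<dots> = (C ** A) ** B" by (simp add: matrix_mul_assoc)
  also have "\<dots> = B" using C by simp
  finally show ?thesis unfolding C_def .
qed

lemma diag_mult:
  "((\<chi> i j. if i = j then a i else 0) ** (\<chi> i j. if i = j then b i else 0) :: real^'n::finite^'n)
     = (\<chi> i j. if i = j then a i * b i else 0)"
  unfolding matrix_matrix_mult_def
  by (simp add: vec_eq_iff if_distrib[of "\<lambda>x. x * _"] cong: if_cong)

definition Gm :: "('n::finite \<Rightarrow> real) \<Rightarrow> (real^'n \<Rightarrow> real) \<Rightarrow> real^'n \<Rightarrow> real^'n^'n" where
  "Gm \<epsilon> \<phi> x = (1 / (\<phi> x)^2) *\<^sub>R pseudo_euclidean \<epsilon>"

lemma Gm_entry: "Gm \<epsilon> \<phi> x $ i $ j = (if i = j then \<epsilon> i else 0) / (\<phi> x)^2"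
  by (simp add: Gm_def pseudo_euclidean_def)

lemma Gm_diag: "Gm \<epsilon> \<phi> x = (\<chi> i j. if i = j then \<epsilon> i / (\<phi> x)^2 else 0)"
  by (simp add: Gm_def pseudo_euclidean_def vec_eq_iff)

context
  fixes \<epsilon> :: "'n::finite \<Rightarrow> real"
  assumes eps: "\<forall>i. \<epsilon> i = 1 \<or> \<epsilon> i = -1"
begin

lemma eps_sq[simp]: "\<epsilon> i * \<epsilon> i = 1"
  using eps by (metis mult_1 mult_minus1 minus_minus)

lemma eps_nz[simp]: "\<epsilon> i \<noteq> 0"
  using eps_sq by (metis mult_zero_left zero_neq_one)

lemma Gm_inv:
  assumes "\<phi> x \<noteq> 0"
  shows "matrix_inv (Gm \<epsilon> \<phi> x) = (\<chi> i j. if i = j then \<epsilon> i * (\<phi> x)^2 else 0)"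
  by (rule matrix_inv_eq) (use assms in \<open>simp_all add: Gm_diag diag_mult mat_def vec_eq_iff\<close>)

lemma ginv_Gm:
  assumes "\<phi> x \<noteq> 0"
  shows "ginv (Gm \<epsilon> \<phi>) x k l = (if k = l then \<epsilon> k * (\<phi> x)^2 else 0)"
  using Gm_inv[of \<phi> x, OF assms] by (simp add: ginv_def)

end

lemma if_mult_0: "(if P then a else 0) * b = (if P then a * b else (0::real))" by simp
lemma mult_if_0: "b * (if P then a else 0) = (if P then b * a else (0::real))" by simp

context
  fixes \<epsilon> :: "'n::finite \<Rightarrow> real" and \<phi> :: "real^'n \<Rightarrow> real" and \<Omega> :: "(real^'n) set"
  assumes eps: "\<forall>i. \<epsilon> i = 1 \<or> \<epsilon> i = -1"
    and op: "open \<Omega>" and pos: "\<forall>x\<in>\<Omega>. \<phi> x > 0" and sm: "smooth_on \<Omega> \<phi>"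
begin

lemma phi_nz: "x \<in> \<Omega> \<Longrightarrow> \<phi> x \<noteq> 0" using pos by force

lemma dphi: "x \<in> \<Omega> \<Longrightarrow> \<phi> differentiable (at x)"
  using smooth_diff'[OF sm] .

lemma dphi1: "x \<in> \<Omega> \<Longrightarrow> pd i \<phi> differentiable (at x)"
  using smooth_diff'[OF smooth_pd[OF sm]] .

lemma dphi2: "x \<in> \<Omega> \<Longrightarrow> pd i (pd j \<phi>) differentiable (at x)"
  using smooth_diff'[OF smooth_pd[OF smooth_pd[OF sm]]] .

lemma pd_cmult: "f differentiable (at x) \<Longrightarrow> pd i (\<lambda>y. c * f y) x = c * pd i f x"
  using pd_mult[of "\<lambda>y. c" x f i] by (simp add: pd_const)

lemma pd_Gm:
  assumes x: "x \<in> \<Omega>"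
  shows "pd i (\<lambda>y. Gm \<epsilon> \<phi> y $ j $ l) x = (if j = l then \<epsilon> j else 0) * (-2 * pd i \<phi> x / (\<phi> x)^3)"
proof -
  have e: "(\<lambda>y. Gm \<epsilon> \<phi> y $ j $ l) = (\<lambda>y. (if j = l then \<epsilon> j else 0) * inverse (\<phi> y * \<phi> y))"
    by (simp add: Gm_entry divide_inverse power2_eq_square fun_eq_iff)
  have d2: "(\<lambda>y. \<phi> y * \<phi> y) differentiable (at x)" using dphi[OF x] by simp
  have "pd i (\<lambda>y. inverse (\<phi> y * \<phi> y)) x = - pd i (\<lambda>y. \<phi> y * \<phi> y) x / (\<phi> x * \<phi> x)^2"
    by (rule pd_inverse[OF d2]) (use phi_nz[OF x] in simp)
  also have "\<dots> = -2 * pd i \<phi> x / (\<phi> x)^3"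
    using phi_nz[OF x] by (simp add: pd_mult[OF dphi[OF x] dphi[OF x]] power2_eq_square power3_eq_cube field_simps)
  finally have "pd i (\<lambda>y. inverse (\<phi> y * \<phi> y)) x = -2 * pd i \<phi> x / (\<phi> x)^3" .
  moreover have "(\<lambda>y. inverse (\<phi> y * \<phi> y)) differentiable (at x)"
    by (rule differentiable_inverse[OF d2]) (use phi_nz[OF x] in simp)
  ultimately show ?thesis unfolding e by (simp add: pd_cmult)
qed

lemma chr:
  assumes x: "x \<in> \<Omega>"
  shows "christoffel (Gm \<epsilon> \<phi>) k i j x =
    - ((if j = k then pd i \<phi> x else 0) + (if i = k then pd j \<phi> x else 0)
       - (if i = j then \<epsilon> k * \<epsilon> i * pd k \<phi> x else 0)) / \<phi> x"
proof -
  have "christoffel (Gm \<epsilon> \<phi>) k i j x = (1/2) * (\<epsilon> k * (\<phi> x)^2 *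
      (pd i (\<lambda>y. Gm \<epsilon> \<phi> y $ j $ k) x + pd j (\<lambda>y. Gm \<epsilon> \<phi> y $ i $ k) x - pd k (\<lambda>y. Gm \<epsilon> \<phi> y $ i $ j) x))"
    unfolding christoffel_def ginv_Gm[of \<epsilon> \<phi> x, OF eps phi_nz[OF x]]
    by (simp add: if_mult_0 cong: if_cong)
  also have "\<dots> = - ((if j = k then pd i \<phi> x else 0) + (if i = k then pd j \<phi> x else 0)
       - (if i = j then \<epsilon> k * \<epsilon> i * pd k \<phi> x else 0)) / \<phi> x"
    unfolding pd_Gm[OF x] using phi_nz[OF x] eps_sq[OF eps]
    by (auto simp: power2_eq_square power3_eq_cube field_simps)
  finally show ?thesis .
qed

end




definition Gam :: "('n::finite \<Rightarrow> real) \<Rightarrow> ('n \<Rightarrow> real) \<Rightarrow> 'n \<Rightarrow> 'n \<Rightarrow> 'n \<Rightarrow> real" where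
  "Gam \<epsilon> a k i j = - ((if j = k then a i else 0) + (if i = k then a j else 0)
       - (if i = j then \<epsilon> k * \<epsilon> i * a k else 0))"


context
  fixes \<epsilon> :: "'n::finite \<Rightarrow> real"
  assumes eps: "\<forall>i. \<epsilon> i = 1 \<or> \<epsilon> i = -1"
begin

lemma eps_sq2[simp]: "\<epsilon> i * (\<epsilon> i * x) = x"
  by (simp add: mult.assoc[symmetric] eps_sq[OF eps])

lemma sum_if_out: "(\<Sum>l\<in>A. if P then f l else (0::real)) = (if P then (\<Sum>l\<in>A. f l) else 0)" by simp

lemma Gam_kkl: "Gam \<epsilon> a k k l = - a l"
  unfolding Gam_def using eps_sq[OF eps] by auto

lemma Gam_kik: "Gam \<epsilon> a k i k = - a i"
  unfolding Gam_def using eps_sq[OF eps] by (auto simp: mult.commute)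

lemma sum_a_Gam: "(\<Sum>l\<in>UNIV. a l * Gam \<epsilon> a l i j) = - (2 * a i * a j - (if i = j then \<epsilon> i * (\<Sum>l\<in>UNIV. \<epsilon> l * (a l)^2) else 0))"
  unfolding Gam_def
  by (simp add: algebra_simps sum.distrib sum_subtractf mult_if_0 if_mult_0 sum_distrib_left power2_eq_square sum_negf)

lemma sumC: "(\<Sum>k\<in>UNIV. \<Sum>l\<in>UNIV. Gam \<epsilon> a k k l * Gam \<epsilon> a l i j) =
   real CARD('n) * (2 * a i * a j - (if i = j then \<epsilon> i * (\<Sum>l\<in>UNIV. \<epsilon> l * (a l)^2) else 0))"
proof -
  have "(\<Sum>l\<in>UNIV. Gam \<epsilon> a k k l * Gam \<epsilon> a l i j) = - (\<Sum>l\<in>UNIV. a l * Gam \<epsilon> a l i j)" for k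
    by (simp add: Gam_kkl sum_negf)
  thus ?thesis by (simp add: sum_a_Gam)
qed

lemma sumD: "(\<Sum>k\<in>UNIV. \<Sum>l\<in>UNIV. Gam \<epsilon> a k j l * Gam \<epsilon> a l i k) =
   (real CARD('n) + 2) * a i * a j - (if i = j then 2 * \<epsilon> i * (\<Sum>l\<in>UNIV. \<epsilon> l * (a l)^2) else 0)"
  unfolding Gam_def
  by (cases "i = j")
   (simp_all add: algebra_simps sum.distrib sum_subtractf mult_if_0 if_mult_0 sum_distrib_left power2_eq_square sum_negf sum_if_out eps_sq[OF eps])

end



lemma pd_minus:
  assumes "f differentiable (at y)"
  shows "pd i (\<lambda>x. - f x) y = - pd i f y"
  using pd_mult[of "\<lambda>x. -1" y f i] assms by (simp add: pd_const)

lemma pd_cmult': "f differentiable (at x) \<Longrightarrow> pd i (\<lambda>y. c * f y) x = c * pd i f x"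
  using pd_mult[of "\<lambda>y. c" x f i] by (simp add: pd_const)

lemma pd_divide:
  assumes "f differentiable (at y)" "g differentiable (at y)" "g y \<noteq> 0"
  shows "pd i (\<lambda>x. f x / g x) y = (pd i f y * g y - f y * pd i g y) / (g y)^2"
proof -
  have "pd i (\<lambda>x. f x * inverse (g x)) y = pd i f y * inverse (g y) + f y * pd i (\<lambda>x. inverse (g x)) y"
    by (rule pd_mult[OF assms(1)]) (use assms in simp)
  also have "\<dots> = (pd i f y * g y - f y * pd i g y) / (g y)^2"
    unfolding pd_inverse[OF assms(2,3)] using assms by (simp add: field_simps power2_eq_square)
  finally show ?thesis by (simp add: divide_inverse)
qed

lemma pd_Gam:
  assumes "\<And>m. f m differentiable (at x)"
  shows "pd k (\<lambda>y. Gam \<epsilon> (\<lambda>m. f m y) k' i j) x = Gam \<epsilon> (\<lambda>m. pd k (f m) x) k' i j"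
  unfolding Gam_def
  using assms
  by (cases "j = k'"; cases "i = k'"; cases "i = j";
      simp add: pd_add pd_diff pd_cmult' pd_const pd_minus)

lemma sumA:
  assumes eps: "\<forall>i. \<epsilon> i = 1 \<or> \<epsilon> i = -1"
  shows "(\<Sum>k\<in>UNIV. Gam \<epsilon> (\<lambda>m. b k m) k i j) =
    - (b j i + b i j - (if i = j then \<epsilon> i * (\<Sum>k\<in>UNIV. \<epsilon> k * b k k) else 0))"
  unfolding Gam_def
  by (cases "i = j") (simp_all add: algebra_simps sum.distrib sum_subtractf mult_if_0 if_mult_0
       sum_distrib_left sum_negf eps_sq2[OF eps])

context
  fixes \<epsilon> :: "'n::finite \<Rightarrow> real" and \<phi> :: "real^'n \<Rightarrow> real" and \<Omega> :: "(real^'n) set"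
  assumes eps: "\<forall>i. \<epsilon> i = 1 \<or> \<epsilon> i = -1"
    and op: "open \<Omega>" and pos: "\<forall>x\<in>\<Omega>. \<phi> x > 0" and sm: "smooth_on \<Omega> \<phi>"
begin

lemmas ctx = eps op pos sm

lemma chr_Gam:
  assumes x: "x \<in> \<Omega>"
  shows "christoffel (Gm \<epsilon> \<phi>) k i j x = Gam \<epsilon> (\<lambda>m. pd m \<phi> x / \<phi> x) k i j"
  unfolding chr[OF ctx x] Gam_def by (simp add: field_simps eps_sq2[OF eps])

lemma q_diff: "y \<in> \<Omega> \<Longrightarrow> (\<lambda>z. pd m \<phi> z / \<phi> z) differentiable (at y)"
  using dphi1[OF ctx] dphi[OF ctx] phi_nz[OF ctx] by simp

lemma pd_q: "x \<in> \<Omega> \<Longrightarrow> pd k (\<lambda>z. pd m \<phi> z / \<phi> z) x =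
   (pd k (pd m \<phi>) x * \<phi> x - pd m \<phi> x * pd k \<phi> x) / (\<phi> x)^2"
  using pd_divide dphi1[OF ctx] dphi[OF ctx] phi_nz[OF ctx] by blast

lemma pd_chr:
  assumes x: "x \<in> \<Omega>"
  shows "pd k (christoffel (Gm \<epsilon> \<phi>) k' i j) x = Gam \<epsilon> (\<lambda>m. pd k (\<lambda>z. pd m \<phi> z / \<phi> z) x) k' i j"
proof -
  have "pd k (christoffel (Gm \<epsilon> \<phi>) k' i j) x = pd k (\<lambda>y. Gam \<epsilon> (\<lambda>m. pd m \<phi> y / \<phi> y) k' i j) x"
    by (rule pd_local[OF op x]) (simp add: chr_Gam)
  also have "\<dots> = Gam \<epsilon> (\<lambda>m. pd k (\<lambda>z. pd m \<phi> z / \<phi> z) x) k' i j"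
    by (rule pd_Gam) (rule q_diff[OF x])
  finally show ?thesis .
qed

lemma symm: "x \<in> \<Omega> \<Longrightarrow> pd j (pd i \<phi>) x = pd i (pd j \<phi>) x"
  by (rule schwarz[OF op _ _ dphi1[OF ctx] dphi1[OF ctx], symmetric]) (use dphi[OF ctx] in auto)

lemma ricci_val:
  assumes x: "x \<in> \<Omega>"
  shows "ricci (Gm \<epsilon> \<phi>) i j x =
    ((real CARD('n) - 2) * pd i (pd j \<phi>) x * \<phi> x
     + (if i = j then \<epsilon> i * (\<phi> x * (\<Sum>k\<in>UNIV. \<epsilon> k * pd k (pd k \<phi>) x)
          - (real CARD('n) - 1) * (\<Sum>k\<in>UNIV. \<epsilon> k * (pd k \<phi> x)^2)) else 0)) / (\<phi> x)^2"
proof -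
  define a where "a m = pd m \<phi> x / \<phi> x" for m
  define b where "b k m = pd k (\<lambda>z. pd m \<phi> z / \<phi> z) x" for k m
  have r: "ricci (Gm \<epsilon> \<phi>) i j x =
     (\<Sum>k\<in>UNIV. Gam \<epsilon> (\<lambda>m. b k m) k i j) - (\<Sum>k\<in>UNIV. Gam \<epsilon> (\<lambda>m. b j m) k i k)
     + (\<Sum>k\<in>UNIV. \<Sum>l\<in>UNIV. Gam \<epsilon> a k k l * Gam \<epsilon> a l i j)
     - (\<Sum>k\<in>UNIV. \<Sum>l\<in>UNIV. Gam \<epsilon> a k j l * Gam \<epsilon> a l i k)"
    unfolding ricci_def pd_chr[OF x] chr_Gam[OF x] a_def[symmetric] b_def[symmetric]
    by (simp add: sum.distrib sum_subtractf)
  have "(\<Sum>k\<in>UNIV. Gam \<epsilon> (\<lambda>m. b j m) k i k) = - real CARD('n) * b j i"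
    by (simp add: Gam_kik[OF eps])
  note r = r[unfolded this sumA[OF eps] sumC[OF eps] sumD[OF eps]]
  have bv: "b k m = (pd k (pd m \<phi>) x * \<phi> x - pd m \<phi> x * pd k \<phi> x) / (\<phi> x)^2" for k m
    unfolding b_def by (rule pd_q[OF x])
  have s: "pd j (pd i \<phi>) x = pd i (pd j \<phi>) x" by (rule symm[OF x])
  have nz: "\<phi> x \<noteq> 0" by (rule phi_nz[OF ctx x])
  show ?thesis
    unfolding r bv a_def s
    using nz
    by (cases "i = j") (simp_all add: field_simps power2_eq_square sum_divide_distrib[symmetric]
        sum_distrib_left sum_subtractf)
qed

end



lemma sumG:
  assumes eps: "\<forall>i. \<epsilon> i = 1 \<or> \<epsilon> i = -1"
  shows "(\<Sum>k\<in>UNIV. Gam \<epsilon> a k i j * c k) =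
    - (c j * a i + c i * a j - (if i = j then \<epsilon> i * (\<Sum>k\<in>UNIV. \<epsilon> k * a k * c k) else 0))"
  unfolding Gam_def
  by (cases "i = j") (simp_all add: algebra_simps sum.distrib sum_subtractf mult_if_0 if_mult_0
       sum_distrib_left sum_negf eps_sq2[OF eps])

context
  fixes \<epsilon> :: "'n::finite \<Rightarrow> real" and \<phi> :: "real^'n \<Rightarrow> real" and \<Omega> :: "(real^'n) set"
  assumes eps: "\<forall>i. \<epsilon> i = 1 \<or> \<epsilon> i = -1"
    and op: "open \<Omega>" and pos: "\<forall>x\<in>\<Omega>. \<phi> x > 0" and sm: "smooth_on \<Omega> \<phi>"
begin

lemmas ctx2 = eps op pos sm

lemma hess_val:
  assumes x: "x \<in> \<Omega>"
  shows "hess (Gm \<epsilon> \<phi>) f i j x = pd i (pd j f) x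
     + (pd i \<phi> x * pd j f x + pd j \<phi> x * pd i f x) / \<phi> x
     - (if i = j then \<epsilon> i * (\<Sum>k\<in>UNIV. \<epsilon> k * pd k \<phi> x * pd k f x) / \<phi> x else 0)"
  unfolding hess_def chr_Gam[OF ctx2 x] sumG[OF eps]
  using phi_nz[OF ctx2 x]
  by (simp add: field_simps sum_divide_distrib[symmetric])

lemma lap_val:
  assumes x: "x \<in> \<Omega>"
  shows "laplacian (Gm \<epsilon> \<phi>) f x = (\<phi> x)^2 * ((\<Sum>k\<in>UNIV. \<epsilon> k * pd k (pd k f) x)
     - (real CARD('n) - 2) * (\<Sum>k\<in>UNIV. \<epsilon> k * pd k \<phi> x * pd k f x) / \<phi> x)"
proof -
  have "laplacian (Gm \<epsilon> \<phi>) f x = (\<Sum>i\<in>UNIV. \<epsilon> i * (\<phi> x)^2 * hess (Gm \<epsilon> \<phi>) f i i x)"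
    unfolding laplacian_def ginv_Gm[of \<epsilon> \<phi> x, OF eps phi_nz[OF ctx2 x]]
    by (simp add: if_mult_0 cong: if_cong)
  also have "\<dots> = (\<phi> x)^2 * ((\<Sum>k\<in>UNIV. \<epsilon> k * pd k (pd k f) x)
     - (real CARD('n) - 2) * (\<Sum>k\<in>UNIV. \<epsilon> k * pd k \<phi> x * pd k f x) / \<phi> x)"
    unfolding hess_val[OF x] using phi_nz[OF ctx2 x]
    by (simp add: algebra_simps sum.distrib sum_subtractf sum_distrib_left eps_sq2[OF eps]
        sum_divide_distrib[symmetric] diff_divide_distrib add_divide_distrib)
  finally show ?thesis .
qed

lemma gradsq_val:
  assumes x: "x \<in> \<Omega>"
  shows "gradsq (Gm \<epsilon> \<phi>) f x = (\<phi> x)^2 * (\<Sum>k\<in>UNIV. \<epsilon> k * (pd k f x)^2)"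
  unfolding gradsq_def ginv_Gm[of \<epsilon> \<phi> x, OF eps phi_nz[OF ctx2 x]]
  by (simp add: if_mult_0 mult_if_0 cong: if_cong) (simp add: sum_distrib_left power2_eq_square ac_simps)

lemma grad_val:
  assumes x: "x \<in> \<Omega>"
  shows "grad (Gm \<epsilon> \<phi>) f i x = \<epsilon> i * (\<phi> x)^2 * pd i f x"
  unfolding grad_def ginv_Gm[of \<epsilon> \<phi> x, OF eps phi_nz[OF ctx2 x]]
  by (simp add: if_mult_0 cong: if_cong)

end



context
  fixes \<epsilon> :: "'n::finite \<Rightarrow> real" and \<phi> :: "real^'n \<Rightarrow> real" and \<Omega> :: "(real^'n) set"
    and N \<psi> :: "real^'n \<Rightarrow> real"
  assumes eps: "\<forall>i. \<epsilon> i = 1 \<or> \<epsilon> i = -1"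
    and op: "open \<Omega>" and pos: "\<forall>x\<in>\<Omega>. \<phi> x > 0" and sm: "smooth_on \<Omega> \<phi>"
    and Npos: "\<forall>x\<in>\<Omega>. N x > 0" and smN: "smooth_on \<Omega> N" and smpsi: "smooth_on \<Omega> \<psi>"
begin

lemmas ctx3 = eps op pos sm

lemma div_val:
  assumes x: "x \<in> \<Omega>"
  shows "divergence (Gm \<epsilon> \<phi>) (\<lambda>i y. grad (Gm \<epsilon> \<phi>) \<psi> i y / N y) x =
    (\<Sum>i\<in>UNIV. \<epsilon> i * (((2 * \<phi> x * pd i \<phi> x * pd i \<psi> x + (\<phi> x)^2 * pd i (pd i \<psi>) x) * N x
        - (\<phi> x)^2 * pd i \<psi> x * pd i N x) / (N x)^2))
    - real CARD('n) * (\<Sum>k\<in>UNIV. \<epsilon> k * \<phi> x * pd k \<phi> x * pd k \<psi> x / N x)"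
proof -
  have Nnz: "N y \<noteq> 0" if "y \<in> \<Omega>" for y using Npos that by force
  have dN: "N differentiable (at y)" if "y \<in> \<Omega>" for y using smooth_diff'[OF smN that] .
  have dpsi: "pd i \<psi> differentiable (at y)" if "y \<in> \<Omega>" for y i
    using smooth_diff'[OF smooth_pd[OF smpsi] that] .
  have dphi: "\<phi> differentiable (at y)" if "y \<in> \<Omega>" for y using smooth_diff'[OF sm that] .
  have p1: "pd i (\<lambda>y. grad (Gm \<epsilon> \<phi>) \<psi> i y / N y) x =
      \<epsilon> i * (((2 * \<phi> x * pd i \<phi> x * pd i \<psi> x + (\<phi> x)^2 * pd i (pd i \<psi>) x) * N x
        - (\<phi> x)^2 * pd i \<psi> x * pd i N x) / (N x)^2)" for i
  proof -
    have "pd i (\<lambda>y. grad (Gm \<epsilon> \<phi>) \<psi> i y / N y) x = pd i (\<lambda>y. \<epsilon> i * ((\<phi> y * \<phi> y * pd i \<psi> y) / N y)) x"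
      by (rule pd_local[OF op x]) (simp add: grad_val[OF ctx3] power2_eq_square)
    also have "\<dots> = \<epsilon> i * pd i (\<lambda>y. (\<phi> y * \<phi> y * pd i \<psi> y) / N y) x"
      by (rule pd_cmult') (use x dphi dpsi dN Nnz in simp)
    also have "pd i (\<lambda>y. (\<phi> y * \<phi> y * pd i \<psi> y) / N y) x =
       (pd i (\<lambda>y. \<phi> y * \<phi> y * pd i \<psi> y) x * N x - (\<phi> x * \<phi> x * pd i \<psi> x) * pd i N x) / (N x)^2"
      by (rule pd_divide) (use x dphi dpsi dN Nnz in simp_all)
    also have "pd i (\<lambda>y. \<phi> y * \<phi> y * pd i \<psi> y) x =
        (pd i \<phi> x * \<phi> x + \<phi> x * pd i \<phi> x) * pd i \<psi> x + \<phi> x * \<phi> x * pd i (pd i \<psi>) x"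
      using x dphi dpsi by (simp add: pd_mult)
    finally show ?thesis by (simp add: algebra_simps power2_eq_square)
  qed
  have p2: "christoffel (Gm \<epsilon> \<phi>) i i k x = - (pd k \<phi> x / \<phi> x)" for i k
    unfolding chr_Gam[OF ctx3 x] Gam_kkl[OF eps] ..
  show ?thesis
    unfolding divergence_def p1 p2 grad_val[OF ctx3 x]
    using phi_nz[OF ctx3 x]
    by (simp add: sum.distrib sum_negf sum_subtractf sum_distrib_left power2_eq_square ac_simps)
qed

end

lemma transpose_diag: "transpose (\<chi> i j. if i = j then a i else 0 :: real^'n::finite^'n) = (\<chi> i j. if i = j then a i else 0)"
  by (simp add: transpose_def vec_eq_iff)

lemma semi_Gm:
  assumes eps: "\<forall>i. \<epsilon> i = 1 \<or> \<epsilon> i = -1"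
    and op: "open \<Omega>" and pos: "\<forall>x\<in>\<Omega>. \<phi> x > 0" and sm: "smooth_on \<Omega> \<phi>"
  shows "semi_riemannian_on \<Omega> (Gm \<epsilon> \<phi>)"
  unfolding semi_riemannian_on_def
proof (intro conjI allI ballI op)
  fix i j
  have e: "(\<lambda>x. Gm \<epsilon> \<phi> x $ i $ j) = (\<lambda>x. (if i = j then \<epsilon> i else 0) * (inverse (\<phi> x) * inverse (\<phi> x)))"
    by (simp add: Gm_entry fun_eq_iff divide_inverse power2_eq_square)
  have "\<forall>x\<in>\<Omega>. \<phi> x \<noteq> 0" using pos by force
  thus "smooth_on \<Omega> (\<lambda>x. Gm \<epsilon> \<phi> x $ i $ j)"
    unfolding e smooth_on_su
    by (intro allI su_mult[OF op] su_const su_inverse[OF op _ sm])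
next
  fix x assume x: "x \<in> \<Omega>"
  show "transpose (Gm \<epsilon> \<phi> x) = Gm \<epsilon> \<phi> x" unfolding Gm_diag by (rule transpose_diag)
  have nz: "\<phi> x \<noteq> 0" using pos x by force
  show "invertible (Gm \<epsilon> \<phi> x)" unfolding invertible_def
    by (rule exI[of _ "\<chi> i j. if i = j then \<epsilon> i * (\<phi> x)^2 else 0"])
       (use nz eps_sq[OF eps] in \<open>simp add: Gm_diag diag_mult mat_def vec_eq_iff\<close>)
qed




lemma split_N:
  fixes e X Y Z W V :: "'n::finite \<Rightarrow> real" and a b c d :: real
  shows "(\<Sum>k\<in>UNIV. e k * (a * b * X k - c * b * Y k * Z k - d * a * (W k)^2)) =
  a * b * (\<Sum>k\<in>UNIV. e k * X k) - c * b * (\<Sum>k\<in>UNIV. e k * Y k * Z k) - d * a * (\<Sum>k\<in>UNIV. e k * (W k)^2)"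
  by (simp add: sum_subtractf sum.distrib sum_distrib_left algebra_simps)

lemma split_psi:
  fixes e X Y Z W V :: "'n::finite \<Rightarrow> real" and a b c d :: real
  shows "(\<Sum>k\<in>UNIV. e k * (b * a * X k - c * b * Y k * Z k - a * Z k * V k)) =
  b * a * (\<Sum>k\<in>UNIV. e k * X k) - c * b * (\<Sum>k\<in>UNIV. e k * Y k * Z k) - a * (\<Sum>k\<in>UNIV. e k * Z k * V k)"
  by (simp add: sum_subtractf sum.distrib sum_distrib_left algebra_simps)

lemma split_div:
  fixes e X Y Z W V :: "'n::finite \<Rightarrow> real" and a b c d :: real
  shows "(\<Sum>i\<in>UNIV. e i * (((2 * a * Y i * Z i + a^2 * X i) * b - a^2 * Z i * V i) / b^2)) =
  (2 * a * b * (\<Sum>k\<in>UNIV. e k * Y k * Z k) + a^2 * b * (\<Sum>k\<in>UNIV. e k * X k)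
     - a^2 * (\<Sum>k\<in>UNIV. e k * Z k * V k)) / b^2"
  by (simp add: sum_subtractf sum.distrib sum_distrib_left sum_divide_distrib[symmetric] algebra_simps)

lemma split_div2:
  fixes e X Y Z W V :: "'n::finite \<Rightarrow> real" and a b c d :: real
  shows "(\<Sum>k\<in>UNIV. e k * a * Y k * Z k / b) = a * (\<Sum>k\<in>UNIV. e k * Y k * Z k) / b"
  by (simp add: sum_distrib_left sum_divide_distrib[symmetric] algebra_simps)

lemma split_diag:
  fixes e X Y Z W V :: "'n::finite \<Rightarrow> real" and a b c d :: real
  shows "(\<Sum>k\<in>UNIV. e k * (a * X k * b + a * Y k * Z k - c * b * (Y k)^2 - d * a^2 * (W k)^2)) =
  a * b * (\<Sum>k\<in>UNIV. e k * X k) + a * (\<Sum>k\<in>UNIV. e k * Y k * Z k) - c * b * (\<Sum>k\<in>UNIV. e k * (Y k)^2)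
   - d * a^2 * (\<Sum>k\<in>UNIV. e k * (W k)^2)"
  by (simp add: sum_subtractf sum.distrib sum_distrib_left algebra_simps)

lemma eq_iff_scaled: "(c::real) \<noteq> 0 \<Longrightarrow> a - b = c * s \<Longrightarrow> (a = b \<longleftrightarrow> s = 0)"
  by auto




theorem theorem1p1:
  fixes \<Omega> :: "(real^'n::finite) set"
    and \<epsilon> :: "'n \<Rightarrow> real"
    and \<phi> N \<psi> :: "real^'n \<Rightarrow> real"
  assumes n3: "CARD('n) \<ge> 3"
    and eps: "\<forall>i. \<epsilon> i = 1 \<or> \<epsilon> i = -1"
    and op: "open \<Omega>"
    and phi_pos: "\<forall>x\<in>\<Omega>. \<phi> x > 0"
    and N_pos: "\<forall>x\<in>\<Omega>. N x > 0"
    and sm: "smooth_on \<Omega> \<phi>" "smooth_on \<Omega> N" "smooth_on \<Omega> \<psi>"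
  shows "electrostatic \<Omega> (\<lambda>x. (1 / (\<phi> x)^2) *\<^sub>R pseudo_euclidean \<epsilon>) N \<psi> \<longleftrightarrow>
    (\<forall>x\<in>\<Omega>.
      (\<forall>i j. i \<noteq> j \<longrightarrow>
         (real CARD('n) - 2) * N x * pd i (pd j \<phi>) x - \<phi> x * pd i (pd j N) x
         - pd i \<phi> x * pd j N x - pd j \<phi> x * pd i N x
         + 2 * (\<phi> x / N x) * pd i \<psi> x * pd j \<psi> x = 0) \<and>
      (\<forall>i.
         \<phi> x * ((real CARD('n) - 2) * N x * pd i (pd i \<phi>) x - \<phi> x * pd i (pd i N) x
                 - 2 * pd i \<phi> x * pd i N x + 2 * (\<phi> x / N x) * (pd i \<psi> x)^2)
         + \<epsilon> i * (\<Sum>k\<in>UNIV. \<epsilon> k *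
             (\<phi> x * pd k (pd k \<phi>) x * N x + \<phi> x * pd k \<phi> x * pd k N x
              - (real CARD('n) - 1) * N x * (pd k \<phi> x)^2
              - 2 / ((real CARD('n) - 1) * N x) * (\<phi> x)^2 * (pd k \<psi> x)^2)) = 0) \<and>
      (\<Sum>k\<in>UNIV. \<epsilon> k * (N x * \<phi> x * pd k (pd k \<psi>) x
           - (real CARD('n) - 2) * N x * pd k \<phi> x * pd k \<psi> x
           - \<phi> x * pd k \<psi> x * pd k N x)) = 0 \<and>
      (\<Sum>k\<in>UNIV. \<epsilon> k * (\<phi> x * N x * pd k (pd k N) x
           - (real CARD('n) - 2) * N x * pd k \<phi> x * pd k N x
           - Chat2 CARD('n) * \<phi> x * (pd k \<psi> x)^2)) = 0)"
  proof -
  define n where "n = real CARD('n)"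
  have n3': "n \<ge> 3" using n3 unfolding n_def by simp
  have Gfold: "(\<lambda>x. (1 / (\<phi> x)^2) *\<^sub>R pseudo_euclidean \<epsilon>) = Gm \<epsilon> \<phi>"
    by (simp add: fun_eq_iff Gm_def)
  note ctx = eps op phi_pos sm(1)
  note ctxH = eps op phi_pos sm(1) N_pos sm(2) sm(3)
  have pw: "(laplacian (Gm \<epsilon> \<phi>) N x = Chat2 CARD('n) * gradsq (Gm \<epsilon> \<phi>) \<psi> x / N x \<and>
        divergence (Gm \<epsilon> \<phi>) (\<lambda>i y. grad (Gm \<epsilon> \<phi>) \<psi> i y / N y) x = 0 \<and>
        (\<forall>i j. N x * ricci (Gm \<epsilon> \<phi>) i j x =
            hess (Gm \<epsilon> \<phi>) N i j x - 2 * pd i \<psi> x * pd j \<psi> x / N x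
            + 2 / ((real CARD('n) - 1) * N x) * gradsq (Gm \<epsilon> \<phi>) \<psi> x * Gm \<epsilon> \<phi> x $ i $ j))
    \<longleftrightarrow>
      ((\<forall>i j. i \<noteq> j \<longrightarrow>
         (real CARD('n) - 2) * N x * pd i (pd j \<phi>) x - \<phi> x * pd i (pd j N) x
         - pd i \<phi> x * pd j N x - pd j \<phi> x * pd i N x
         + 2 * (\<phi> x / N x) * pd i \<psi> x * pd j \<psi> x = 0) \<and>
      (\<forall>i.
         \<phi> x * ((real CARD('n) - 2) * N x * pd i (pd i \<phi>) x - \<phi> x * pd i (pd i N) x
                 - 2 * pd i \<phi> x * pd i N x + 2 * (\<phi> x / N x) * (pd i \<psi> x)^2)
         + \<epsilon> i * (\<Sum>k\<in>UNIV. \<epsilon> k *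
             (\<phi> x * pd k (pd k \<phi>) x * N x + \<phi> x * pd k \<phi> x * pd k N x
              - (real CARD('n) - 1) * N x * (pd k \<phi> x)^2
              - 2 / ((real CARD('n) - 1) * N x) * (\<phi> x)^2 * (pd k \<psi> x)^2)) = 0) \<and>
      (\<Sum>k\<in>UNIV. \<epsilon> k * (N x * \<phi> x * pd k (pd k \<psi>) x
           - (real CARD('n) - 2) * N x * pd k \<phi> x * pd k \<psi> x
           - \<phi> x * pd k \<psi> x * pd k N x)) = 0 \<and>
      (\<Sum>k\<in>UNIV. \<epsilon> k * (\<phi> x * N x * pd k (pd k N) x
           - (real CARD('n) - 2) * N x * pd k \<phi> x * pd k N x
           - Chat2 CARD('n) * \<phi> x * (pd k \<psi> x)^2)) = 0)" if x: "x \<in> \<Omega>" for x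
  proof -
    have fp: "\<phi> x > 0" using phi_pos x by blast
    have Np: "N x > 0" using N_pos x by blast
    define A where "A = (\<Sum>k\<in>UNIV. \<epsilon> k * pd k (pd k N) x)"
    define T where "T = (\<Sum>k\<in>UNIV. \<epsilon> k * pd k \<phi> x * pd k N x)"
    define Q where "Q = (\<Sum>k\<in>UNIV. \<epsilon> k * (pd k \<psi> x)^2)"
    define B where "B = (\<Sum>k\<in>UNIV. \<epsilon> k * pd k (pd k \<psi>) x)"
    define U where "U = (\<Sum>k\<in>UNIV. \<epsilon> k * pd k \<phi> x * pd k \<psi> x)"
    define V where "V = (\<Sum>k\<in>UNIV. \<epsilon> k * pd k \<psi> x * pd k N x)"
    define P where "P = (\<Sum>k\<in>UNIV. \<epsilon> k * pd k (pd k \<phi>) x)"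
    define S where "S = (\<Sum>k\<in>UNIV. \<epsilon> k * (pd k \<phi> x)^2)"
    define C where "C = Chat2 CARD('n)"
    have lapE: "laplacian (Gm \<epsilon> \<phi>) N x = Chat2 CARD('n) * gradsq (Gm \<epsilon> \<phi>) \<psi> x / N x \<longleftrightarrow>
       (\<Sum>k\<in>UNIV. \<epsilon> k * (\<phi> x * N x * pd k (pd k N) x
           - (real CARD('n) - 2) * N x * pd k \<phi> x * pd k N x
           - Chat2 CARD('n) * \<phi> x * (pd k \<psi> x)^2)) = 0"
    proof (rule eq_iff_scaled)
      show "\<phi> x / N x \<noteq> 0" using fp Np by simp
      show "laplacian (Gm \<epsilon> \<phi>) N x - Chat2 CARD('n) * gradsq (Gm \<epsilon> \<phi>) \<psi> x / N x =
        \<phi> x / N x * (\<Sum>k\<in>UNIV. \<epsilon> k * (\<phi> x * N x * pd k (pd k N) x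
           - (real CARD('n) - 2) * N x * pd k \<phi> x * pd k N x
           - Chat2 CARD('n) * \<phi> x * (pd k \<psi> x)^2))"
        unfolding lap_val[OF ctx x] gradsq_val[OF ctx x] split_N A_def[symmetric] T_def[symmetric]
          Q_def[symmetric] C_def[symmetric] n_def[symmetric]
        using fp Np by (simp add: field_simps power2_eq_square)
    qed
    have divE: "divergence (Gm \<epsilon> \<phi>) (\<lambda>i y. grad (Gm \<epsilon> \<phi>) \<psi> i y / N y) x = 0 \<longleftrightarrow>
      (\<Sum>k\<in>UNIV. \<epsilon> k * (N x * \<phi> x * pd k (pd k \<psi>) x
           - (real CARD('n) - 2) * N x * pd k \<phi> x * pd k \<psi> x
           - \<phi> x * pd k \<psi> x * pd k N x)) = 0"
    proof (rule eq_iff_scaled)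
      show "\<phi> x / (N x)^2 \<noteq> 0" using fp Np by simp
      show "divergence (Gm \<epsilon> \<phi>) (\<lambda>i y. grad (Gm \<epsilon> \<phi>) \<psi> i y / N y) x - 0 =
        \<phi> x / (N x)^2 * (\<Sum>k\<in>UNIV. \<epsilon> k * (N x * \<phi> x * pd k (pd k \<psi>) x
           - (real CARD('n) - 2) * N x * pd k \<phi> x * pd k \<psi> x
           - \<phi> x * pd k \<psi> x * pd k N x))"
        unfolding div_val[OF ctxH x] split_div split_div2 split_psi B_def[symmetric] U_def[symmetric]
          V_def[symmetric] n_def[symmetric]
        using fp Np by (simp add: field_simps power2_eq_square)
    qed
    have offE: "N x * ricci (Gm \<epsilon> \<phi>) i j x =
            hess (Gm \<epsilon> \<phi>) N i j x - 2 * pd i \<psi> x * pd j \<psi> x / N x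
            + 2 / ((real CARD('n) - 1) * N x) * gradsq (Gm \<epsilon> \<phi>) \<psi> x * Gm \<epsilon> \<phi> x $ i $ j
       \<longleftrightarrow> (real CARD('n) - 2) * N x * pd i (pd j \<phi>) x - \<phi> x * pd i (pd j N) x
         - pd i \<phi> x * pd j N x - pd j \<phi> x * pd i N x
         + 2 * (\<phi> x / N x) * pd i \<psi> x * pd j \<psi> x = 0" if ij: "i \<noteq> j" for i j
    proof (rule eq_iff_scaled)
      show "1 / \<phi> x \<noteq> 0" using fp by simp
      show "N x * ricci (Gm \<epsilon> \<phi>) i j x -
            (hess (Gm \<epsilon> \<phi>) N i j x - 2 * pd i \<psi> x * pd j \<psi> x / N x
            + 2 / ((real CARD('n) - 1) * N x) * gradsq (Gm \<epsilon> \<phi>) \<psi> x * Gm \<epsilon> \<phi> x $ i $ j)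
         = 1 / \<phi> x * ((real CARD('n) - 2) * N x * pd i (pd j \<phi>) x - \<phi> x * pd i (pd j N) x
         - pd i \<phi> x * pd j N x - pd j \<phi> x * pd i N x
         + 2 * (\<phi> x / N x) * pd i \<psi> x * pd j \<psi> x)"
        unfolding ricci_val[OF ctx x] hess_val[OF ctx x] Gm_entry using ij fp Np
        by (simp add: field_simps power2_eq_square)
    qed
    have n1: "n - 1 \<noteq> 0" using n3' by simp
    have diagE: "N x * ricci (Gm \<epsilon> \<phi>) i i x =
            hess (Gm \<epsilon> \<phi>) N i i x - 2 * pd i \<psi> x * pd i \<psi> x / N x
            + 2 / ((real CARD('n) - 1) * N x) * gradsq (Gm \<epsilon> \<phi>) \<psi> x * Gm \<epsilon> \<phi> x $ i $ i
       \<longleftrightarrow> \<phi> x * ((real CARD('n) - 2) * N x * pd i (pd i \<phi>) x - \<phi> x * pd i (pd i N) x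
                 - 2 * pd i \<phi> x * pd i N x + 2 * (\<phi> x / N x) * (pd i \<psi> x)^2)
         + \<epsilon> i * (\<Sum>k\<in>UNIV. \<epsilon> k *
             (\<phi> x * pd k (pd k \<phi>) x * N x + \<phi> x * pd k \<phi> x * pd k N x
              - (real CARD('n) - 1) * N x * (pd k \<phi> x)^2
              - 2 / ((real CARD('n) - 1) * N x) * (\<phi> x)^2 * (pd k \<psi> x)^2)) = 0" for i
    proof (rule eq_iff_scaled)
      show "1 / (\<phi> x)^2 \<noteq> 0" using fp by simp
      show "N x * ricci (Gm \<epsilon> \<phi>) i i x -
            (hess (Gm \<epsilon> \<phi>) N i i x - 2 * pd i \<psi> x * pd i \<psi> x / N x
            + 2 / ((real CARD('n) - 1) * N x) * gradsq (Gm \<epsilon> \<phi>) \<psi> x * Gm \<epsilon> \<phi> x $ i $ i)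
         = 1 / (\<phi> x)^2 * (\<phi> x * ((real CARD('n) - 2) * N x * pd i (pd i \<phi>) x - \<phi> x * pd i (pd i N) x
                 - 2 * pd i \<phi> x * pd i N x + 2 * (\<phi> x / N x) * (pd i \<psi> x)^2)
         + \<epsilon> i * (\<Sum>k\<in>UNIV. \<epsilon> k *
             (\<phi> x * pd k (pd k \<phi>) x * N x + \<phi> x * pd k \<phi> x * pd k N x
              - (real CARD('n) - 1) * N x * (pd k \<phi> x)^2
              - 2 / ((real CARD('n) - 1) * N x) * (\<phi> x)^2 * (pd k \<psi> x)^2)))"
        unfolding ricci_val[OF ctx x] hess_val[OF ctx x] Gm_entry gradsq_val[OF ctx x] split_diag
          P_def[symmetric] S_def[symmetric] T_def[symmetric] Q_def[symmetric] n_def[symmetric]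
        using fp Np n1
        by (simp add: field_simps power2_eq_square)
    qed
    define Rq where "Rq i j \<longleftrightarrow> (N x * ricci (Gm \<epsilon> \<phi>) i j x =
            hess (Gm \<epsilon> \<phi>) N i j x - 2 * pd i \<psi> x * pd j \<psi> x / N x
            + 2 / ((real CARD('n) - 1) * N x) * gradsq (Gm \<epsilon> \<phi>) \<psi> x * Gm \<epsilon> \<phi> x $ i $ j)" for i j
    define Oq where "Oq i j \<longleftrightarrow> (         (real CARD('n) - 2) * N x * pd i (pd j \<phi>) x - \<phi> x * pd i (pd j N) x
         - pd i \<phi> x * pd j N x - pd j \<phi> x * pd i N x
         + 2 * (\<phi> x / N x) * pd i \<psi> x * pd j \<psi> x = 0)" for i j
    define Dq where "Dq i \<longleftrightarrow> (         \<phi> x * ((real CARD('n) - 2) * N x * pd i (pd i \<phi>) x - \<phi> x * pd i (pd i N) x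
                 - 2 * pd i \<phi> x * pd i N x + 2 * (\<phi> x / N x) * (pd i \<psi> x)^2)
         + \<epsilon> i * (\<Sum>k\<in>UNIV. \<epsilon> k *
             (\<phi> x * pd k (pd k \<phi>) x * N x + \<phi> x * pd k \<phi> x * pd k N x
              - (real CARD('n) - 1) * N x * (pd k \<phi> x)^2
              - 2 / ((real CARD('n) - 1) * N x) * (\<phi> x)^2 * (pd k \<psi> x)^2)) = 0)" for i
    have offE': "i \<noteq> j \<Longrightarrow> Rq i j \<longleftrightarrow> Oq i j" for i j unfolding Rq_def Oq_def by (rule offE)
    have diagE': "Rq i i \<longleftrightarrow> Dq i" for i unfolding Rq_def Dq_def by (rule diagE)
    have "(\<forall>i j. Rq i j) \<longleftrightarrow> (\<forall>i j. i \<noteq> j \<longrightarrow> Oq i j) \<and> (\<forall>i. Dq i)"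
      using offE' diagE' by metis
    note ricE = this[unfolded Rq_def Oq_def Dq_def]
    show ?thesis unfolding lapE divE ricE by (intro iffI; elim conjE; intro conjI; assumption)
  qed
  define Lp where "Lp x \<longleftrightarrow> (laplacian (Gm \<epsilon> \<phi>) N x = Chat2 CARD('n) * gradsq (Gm \<epsilon> \<phi>) \<psi> x / N x \<and>
        divergence (Gm \<epsilon> \<phi>) (\<lambda>i y. grad (Gm \<epsilon> \<phi>) \<psi> i y / N y) x = 0 \<and>
        (\<forall>i j. N x * ricci (Gm \<epsilon> \<phi>) i j x =
            hess (Gm \<epsilon> \<phi>) N i j x - 2 * pd i \<psi> x * pd j \<psi> x / N x
            + 2 / ((real CARD('n) - 1) * N x) * gradsq (Gm \<epsilon> \<phi>) \<psi> x * Gm \<epsilon> \<phi> x $ i $ j))" for x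
  define Rp where "Rp x \<longleftrightarrow>       ((\<forall>i j. i \<noteq> j \<longrightarrow>
         (real CARD('n) - 2) * N x * pd i (pd j \<phi>) x - \<phi> x * pd i (pd j N) x
         - pd i \<phi> x * pd j N x - pd j \<phi> x * pd i N x
         + 2 * (\<phi> x / N x) * pd i \<psi> x * pd j \<psi> x = 0) \<and>
      (\<forall>i.
         \<phi> x * ((real CARD('n) - 2) * N x * pd i (pd i \<phi>) x - \<phi> x * pd i (pd i N) x
                 - 2 * pd i \<phi> x * pd i N x + 2 * (\<phi> x / N x) * (pd i \<psi> x)^2)
         + \<epsilon> i * (\<Sum>k\<in>UNIV. \<epsilon> k *
             (\<phi> x * pd k (pd k \<phi>) x * N x + \<phi> x * pd k \<phi> x * pd k N x
              - (real CARD('n) - 1) * N x * (pd k \<phi> x)^2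
              - 2 / ((real CARD('n) - 1) * N x) * (\<phi> x)^2 * (pd k \<psi> x)^2)) = 0) \<and>
      (\<Sum>k\<in>UNIV. \<epsilon> k * (N x * \<phi> x * pd k (pd k \<psi>) x
           - (real CARD('n) - 2) * N x * pd k \<phi> x * pd k \<psi> x
           - \<phi> x * pd k \<psi> x * pd k N x)) = 0 \<and>
      (\<Sum>k\<in>UNIV. \<epsilon> k * (\<phi> x * N x * pd k (pd k N) x
           - (real CARD('n) - 2) * N x * pd k \<phi> x * pd k N x
           - Chat2 CARD('n) * \<phi> x * (pd k \<psi> x)^2)) = 0)" for x
  have pw': "x \<in> \<Omega> \<Longrightarrow> Lp x \<longleftrightarrow> Rp x" for x unfolding Lp_def Rp_def by (rule pw)
  have E2: "(\<forall>x\<in>\<Omega>. Lp x) \<longleftrightarrow> (\<forall>x\<in>\<Omega>. Rp x)" using pw' by blast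
  have semi: "semi_riemannian_on \<Omega> (Gm \<epsilon> \<phi>)" by (rule semi_Gm[OF ctx])
  have Nt: "(\<forall>x\<in>\<Omega>. 0 < N x) = True" using N_pos by simp
  have E1: "electrostatic \<Omega> (Gm \<epsilon> \<phi>) N \<psi> \<longleftrightarrow> (\<forall>x\<in>\<Omega>. Lp x)"
    using N_pos unfolding electrostatic_def Lp_def by (simp only: n3 semi sm simp_thms Nt)
  have E3: "(\<forall>x\<in>\<Omega>. Rp x) \<longleftrightarrow> (\<forall>x\<in>\<Omega>. ((\<forall>i j. i \<noteq> j \<longrightarrow>
         (real CARD('n) - 2) * N x * pd i (pd j \<phi>) x - \<phi> x * pd i (pd j N) x
         - pd i \<phi> x * pd j N x - pd j \<phi> x * pd i N x
         + 2 * (\<phi> x / N x) * pd i \<psi> x * pd j \<psi> x = 0) \<and>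
      (\<forall>i.
         \<phi> x * ((real CARD('n) - 2) * N x * pd i (pd i \<phi>) x - \<phi> x * pd i (pd i N) x
                 - 2 * pd i \<phi> x * pd i N x + 2 * (\<phi> x / N x) * (pd i \<psi> x)^2)
         + \<epsilon> i * (\<Sum>k\<in>UNIV. \<epsilon> k *
             (\<phi> x * pd k (pd k \<phi>) x * N x + \<phi> x * pd k \<phi> x * pd k N x
              - (real CARD('n) - 1) * N x * (pd k \<phi> x)^2
              - 2 / ((real CARD('n) - 1) * N x) * (\<phi> x)^2 * (pd k \<psi> x)^2)) = 0) \<and>
      (\<Sum>k\<in>UNIV. \<epsilon> k * (N x * \<phi> x * pd k (pd k \<psi>) x
           - (real CARD('n) - 2) * N x * pd k \<phi> x * pd k \<psi> x
           - \<phi> x * pd k \<psi> x * pd k N x)) = 0 \<and>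
      (\<Sum>k\<in>UNIV. \<epsilon> k * (\<phi> x * N x * pd k (pd k N) x
           - (real CARD('n) - 2) * N x * pd k \<phi> x * pd k N x
           - Chat2 CARD('n) * \<phi> x * (pd k \<psi> x)^2)) = 0))" unfolding Rp_def by (rule refl)
  show ?thesis unfolding Gfold by (simp only: E1 E2 E3)
qed



end
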